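(* Let $L>0$, let $K$ be a positive integer, $\Delta x = L/K$, let $\Delta t>0$, $\alpha\in\mathbb{R}$, $\beta\in\mathbb{R}\setminus\{0\}$, and $q>1$. Suppose $u^{(0)},u^{(1)},\dots,u^{(m)}$ are $K$-periodic grid functions such that, for each $n=0,\dots,m-1$, $u^{(n+1)}$ is a solution of the energy-conservative scheme at step $n$ (see context), and let $r$ satisfy $$ r \ge \max_{m'\le m}\|u^{(m')}\|_\infty . $$ Define $$\varepsilon_1(q,r,\Delta x) = (q-1)(\Delta x)^3\left[\frac{|\alpha|}{6}(\Delta x)^2(q^2+q+1)r + \frac{3}{2}|\beta|(q+1)\right]^{-1},$$ $$\varepsilon_2(q,r,\Delta x) = (\Delta x)^3\left[\frac{|\alpha|}{6}(\Delta x)^2(2q+1)r + \frac{3}{2}|\beta|\right]^{-1}.$$ If $\Delta t < \min\{\varepsilon_1(q,r,\Delta x),\varepsilon_2(q,r,\Delta x)\}$, then the scheme at step $m$ admits a unique solution $u^{(m+1)}$ satisfying $\|u^{(m+1)}\|_\infty \le qr$.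
   Context: Grid functions are real sequences $v=(v_k)_{k\in\mathbb{Z}}$ with $v_{k+K}=v_k$. Define $\delta^{\langle 1\rangle}_x v_k = (v_{k+1}-v_{k-1})/(2\Delta x)$, $\delta^{\langle 2\rangle}_x v_k = (v_{k+1}-2v_k+v_{k-1})/(\Delta x)^2$, and $\|v\|_\infty=\max_k|v_k|$. For a sequence of grid functions $v^{(n)}$, let $\delta^+_t v^{(n)}_k = (v^{(n+1)}_k - v^{(n)}_k)/\Delta t$ and $\mu^+_t v^{(n)}_k = (v^{(n+1)}_k+v^{(n)}_k)/2$. Given $u^{(n)}$, a grid function $u^{(n+1)}$ is a solution of the scheme at step $n$ if for all $k\in\mathbb{Z}$ $$\delta^+_t u^{(n)}_k = -\frac{\alpha}{6}\,\delta^{\langle 1\rangle}_x\Big\{(u^{(n+1)}_k)^2 + u^{(n+1)}_k u^{(n)}_k + (u^{(n)}_k)^2\Big\} + \beta\,\delta^{\langle 1\rangle}_x\delta^{\langle 2\rangle}_x \mu^+_t u^{(n)}_k .$$ This is a discretization of the KdV equation $u_t=-\alpha u u_x+\beta u_{xxx}$ with $L$-periodic boundary conditions. *)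

theory Defs
  imports Complex_Main
begin

definition periodic_grid :: "nat \<Rightarrow> (int \<Rightarrow> real) \<Rightarrow> bool" where
  "periodic_grid K v \<longleftrightarrow> (\<forall>k. v (k + int K) = v k)"

definition delta1 :: "real \<Rightarrow> (int \<Rightarrow> real) \<Rightarrow> int \<Rightarrow> real" where
  "delta1 dx v k = (v (k + 1) - v (k - 1)) / (2 * dx)"

definition delta2 :: "real \<Rightarrow> (int \<Rightarrow> real) \<Rightarrow> int \<Rightarrow> real" where
  "delta2 dx v k = (v (k + 1) - 2 * v k + v (k - 1)) / dx ^ 2"

text \<open>Maximum norm of a K-periodic grid function (max over one period = max over all k).\<close>
definition grid_norm :: "nat \<Rightarrow> (int \<Rightarrow> real) \<Rightarrow> real" where
  "grid_norm K v = Max ((\<lambda>k. \<bar>v k\<bar>) ` {0..<int K})"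

definition scheme_sol :: "real \<Rightarrow> real \<Rightarrow> real \<Rightarrow> real \<Rightarrow> (int \<Rightarrow> real) \<Rightarrow> (int \<Rightarrow> real) \<Rightarrow> bool" where
  "scheme_sol \<alpha> \<beta> dx dt v w \<longleftrightarrow>
     (\<forall>k. (w k - v k) / dt =
        - (\<alpha> / 6) * delta1 dx (\<lambda>j. (w j)\<^sup>2 + w j * v j + (v j)\<^sup>2) k
        + \<beta> * delta1 dx (delta2 dx (\<lambda>j. (w j + v j) / 2)) k)"

definition eps1 :: "real \<Rightarrow> real \<Rightarrow> real \<Rightarrow> real \<Rightarrow> real \<Rightarrow> real" where
  "eps1 \<alpha> \<beta> q r dx = (q - 1) * dx ^ 3 /
     (\<bar>\<alpha>\<bar> / 6 * dx\<^sup>2 * (q\<^sup>2 + q + 1) * r + 3 / 2 * \<bar>\<beta>\<bar> * (q + 1))"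

definition eps2 :: "real \<Rightarrow> real \<Rightarrow> real \<Rightarrow> real \<Rightarrow> real \<Rightarrow> real" where
  "eps2 \<alpha> \<beta> q r dx = dx ^ 3 /
     (\<bar>\<alpha>\<bar> / 6 * dx\<^sup>2 * (2 * q + 1) * r + 3 / 2 * \<bar>\<beta>\<bar>)"

end

theory Submission
  imports Defs
begin

definition phiS :: "real \<Rightarrow> real \<Rightarrow> real \<Rightarrow> real \<Rightarrow> (int \<Rightarrow> real) \<Rightarrow> (int \<Rightarrow> real) \<Rightarrow> int \<Rightarrow> real" where
  "phiS a b dx dt v f k = v k + dt * (- (a / 6) * delta1 dx (\<lambda>j. (f j)\<^sup>2 + f j * v j + (v j)\<^sup>2) k
        + b * delta1 dx (delta2 dx (\<lambda>j. (f j + v j) / 2)) k)"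

lemma phiS_shift:
  "phiS a b dx dt v f (k + s) = phiS a b dx dt (\<lambda>j. v (j + s)) (\<lambda>j. f (j + s)) k"
  by (simp add: phiS_def delta1_def delta2_def algebra_simps)

lemma phiS_diff:
  assumes "dx \<noteq> 0"
  shows "phiS a b dx dt v f k - phiS a b dx dt v g k =
   dt * (- (a / 6) * delta1 dx (\<lambda>j. (f j - g j) * (f j + g j + v j)) k
        + b / 2 * delta1 dx (delta2 dx (\<lambda>j. f j - g j)) k)"
  using assms by (simp add: phiS_def delta1_def delta2_def field_simps power2_eq_square)

lemma d1_bound:
  assumes "dx > 0" "\<And>j. \<bar>g j\<bar> \<le> B"
  shows "\<bar>delta1 dx g k\<bar> \<le> B / dx"
proof -
  have "\<bar>g (k+1) - g (k-1)\<bar> \<le> 2 * B" using assms(2)[of "k+1"] assms(2)[of "k-1"] by linarith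
  then show ?thesis using assms(1) by (simp add: delta1_def abs_divide field_simps)
qed

lemma d1d2_bound:
  assumes "dx > 0" "\<And>j. \<bar>g j\<bar> \<le> B"
  shows "\<bar>delta1 dx (delta2 dx g) k\<bar> \<le> 3 * B / dx ^ 3"
proof -
  have e: "delta1 dx (delta2 dx g) k = (g (k+2) - 2 * g (k+1) + 2 * g (k-1) - g (k-2)) / (2 * dx^3)"
    using assms(1) by (simp add: delta1_def delta2_def field_simps power2_eq_square power3_eq_cube)
  have "\<bar>g (k+2) - 2 * g (k+1) + 2 * g (k-1) - g (k-2)\<bar> \<le> 6 * B"
    using assms(2)[of "k+2"] assms(2)[of "k+1"] assms(2)[of "k-1"] assms(2)[of "k-2"] by linarith
  then show ?thesis unfolding e using assms(1) by (simp add: abs_divide field_simps)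
qed

lemma abs_comb:
  fixes dt :: real
  assumes "dt > 0"
  shows "\<bar>x + dt * (- (a / 6) * A + b * B)\<bar> \<le> \<bar>x\<bar> + dt * (\<bar>a\<bar> / 6 * \<bar>A\<bar> + \<bar>b\<bar> * \<bar>B\<bar>)"
proof -
  have "\<bar>- (a / 6) * A + b * B\<bar> \<le> \<bar>a\<bar> / 6 * \<bar>A\<bar> + \<bar>b\<bar> * \<bar>B\<bar>"
    by (rule order.trans[OF abs_triangle_ineq]) (simp add: abs_mult abs_divide)
  then have "\<bar>dt * (- (a / 6) * A + b * B)\<bar> \<le> dt * (\<bar>a\<bar> / 6 * \<bar>A\<bar> + \<bar>b\<bar> * \<bar>B\<bar>)"
    using assms by (simp add: abs_mult)
  then show ?thesis by (rule order.trans[OF abs_triangle_ineq add_left_mono])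
qed

lemma per_shift:
  assumes "periodic_grid K v"
  shows "v (k + int K * j) = v k"
proof (induction j rule: int_induct[where k=0])
  case base then show ?case by simp
next
  case (step1 i)
  have "v (k + int K * (i + 1)) = v ((k + int K * i) + int K)" by (simp add: algebra_simps)
  also have "\<dots> = v (k + int K * i)" using assms unfolding periodic_grid_def by blast
  finally show ?case using step1 by simp
next
  case (step2 i)
  have "v (k + int K * i) = v ((k + int K * (i - 1)) + int K)" by (simp add: algebra_simps)
  also have "\<dots> = v (k + int K * (i - 1))" using assms unfolding periodic_grid_def by blast
  finally show ?case using step2 by simp
qed

lemma per_bound:
  assumes "periodic_grid K v" "K > 0"
  shows "\<bar>v k\<bar> \<le> grid_norm K v"
proof -
  have "k = k mod int K + int K * (k div int K)" by simp
  then have "v k = v (k mod int K)" using per_shift[OF assms(1), of "k mod int K" "k div int K"] by simp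
  moreover have "k mod int K \<in> {0..<int K}" using assms(2) by simp
  ultimately show ?thesis unfolding grid_norm_def by (metis Max_ge finite_atLeastLessThan_int finite_imageI image_eqI)
qed

lemma norm_le:
  assumes "K > 0" "\<And>k. \<bar>v k\<bar> \<le> B"
  shows "grid_norm K v \<le> B"
  unfolding grid_norm_def using assms by (subst Max_le_iff) auto

theorem theorem3p1:
  fixes L dt \<alpha> \<beta> q r :: real and K m :: nat and u :: "nat \<Rightarrow> int \<Rightarrow> real"
  assumes "L > 0" and "K > 0" and "dt > 0" and "\<beta> \<noteq> 0" and "q > 1"
    and "\<forall>n\<le>m. periodic_grid K (u n)"
    and "\<forall>n<m. scheme_sol \<alpha> \<beta> (L / real K) dt (u n) (u (Suc n))"
    and "\<forall>n\<le>m. grid_norm K (u n) \<le> r"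
    and "dt < min (eps1 \<alpha> \<beta> q r (L / real K)) (eps2 \<alpha> \<beta> q r (L / real K))"
  shows "\<exists>!w. periodic_grid K w \<and> scheme_sol \<alpha> \<beta> (L / real K) dt (u m) w
              \<and> grid_norm K w \<le> q * r"
proof -
  define dx where "dx = L / real K"
  define v where "v = u m"
  define Phi where "Phi = phiS \<alpha> \<beta> dx dt v"
  define c where "c = dt * (\<bar>\<alpha>\<bar> / 6 * (2 * q + 1) * r / dx + 3 / 2 * \<bar>\<beta>\<bar> / dx ^ 3)"
  have dx: "dx > 0" unfolding dx_def using assms by simp
  have vper: "periodic_grid K v" unfolding v_def using assms(6) by simp
  have vb: "\<And>k. \<bar>v k\<bar> \<le> r" using per_bound[OF vper assms(2)] assms(8) unfolding v_def by (meson order.trans order_refl)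
  have r0: "r \<ge> 0" using vb[of 0] by linarith
  have qr: "r \<le> q * r" using mult_right_mono[of 1 q r] r0 assms(5) by simp
  have dt1: "dt < eps1 \<alpha> \<beta> q r dx" and dt2: "dt < eps2 \<alpha> \<beta> q r dx" using assms(9) unfolding dx_def by auto
  have c0: "c \<ge> 0" unfolding c_def using dx r0 assms(3,5) by simp
  have den2: "\<bar>\<alpha>\<bar> / 6 * dx\<^sup>2 * (2 * q + 1) * r + 3 / 2 * \<bar>\<beta>\<bar> > 0"
    using assms(4,5) r0 dx by (simp add: add_nonneg_pos)
  have c1: "c < 1"
  proof -
    have "dt * (\<bar>\<alpha>\<bar> / 6 * dx\<^sup>2 * (2 * q + 1) * r + 3 / 2 * \<bar>\<beta>\<bar>) < dx ^ 3"
      using dt2 den2 unfolding eps2_def by (simp add: pos_less_divide_eq)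
    moreover have "c = dt * (\<bar>\<alpha>\<bar> / 6 * dx\<^sup>2 * (2 * q + 1) * r + 3 / 2 * \<bar>\<beta>\<bar>) / dx ^ 3"
      unfolding c_def using dx by (simp add: field_simps power2_eq_square power3_eq_cube)
    ultimately show ?thesis using dx by simp
  qed
  have inv: "\<bar>Phi f k\<bar> \<le> q * r" if hf: "\<And>j. \<bar>f j\<bar> \<le> q * r" for f k
  proof -
    have b1: "\<bar>(f j)\<^sup>2 + f j * v j + (v j)\<^sup>2\<bar> \<le> (q\<^sup>2 + q + 1) * r\<^sup>2" for j
    proof -
      have "\<bar>(f j)\<^sup>2 + f j * v j + (v j)\<^sup>2\<bar> \<le> \<bar>f j\<bar>\<^sup>2 + \<bar>f j\<bar> * \<bar>v j\<bar> + \<bar>v j\<bar>\<^sup>2"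
        by (simp add: abs_mult power2_eq_square abs_triangle_ineq order.trans[OF abs_triangle_ineq])
      also have "\<dots> \<le> (q*r)\<^sup>2 + (q*r) * r + r\<^sup>2"
        using hf[of j] vb[of j] by (intro add_mono mult_mono power_mono) auto
      finally show ?thesis by (simp add: algebra_simps power2_eq_square)
    qed
    have b2: "\<bar>(f j + v j) / 2\<bar> \<le> (q + 1) * r / 2" for j
      using hf[of j] vb[of j] by (simp add: abs_divide algebra_simps)
    have "\<bar>Phi f k\<bar> \<le> \<bar>v k\<bar> + dt * (\<bar>\<alpha>\<bar> / 6 * \<bar>delta1 dx (\<lambda>j. (f j)\<^sup>2 + f j * v j + (v j)\<^sup>2) k\<bar>
        + \<bar>\<beta>\<bar> * \<bar>delta1 dx (delta2 dx (\<lambda>j. (f j + v j) / 2)) k\<bar>)"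
      unfolding Phi_def phiS_def using abs_comb[OF assms(3)] by simp
    also have "\<dots> \<le> r + dt * (\<bar>\<alpha>\<bar> / 6 * ((q\<^sup>2 + q + 1) * r\<^sup>2 / dx) + \<bar>\<beta>\<bar> * (3 * ((q + 1) * r / 2) / dx ^ 3))"
      using vb[of k] d1_bound[OF dx b1] d1d2_bound[OF dx b2] assms(3)
      by (intro add_mono mult_left_mono mult_mono) auto
    also have "\<dots> = r + r * (dt * (\<bar>\<alpha>\<bar> / 6 * dx\<^sup>2 * (q\<^sup>2 + q + 1) * r + 3 / 2 * \<bar>\<beta>\<bar> * (q + 1)) / dx ^ 3)"
      using dx by (simp add: field_simps power2_eq_square power3_eq_cube)
    also have "\<dots> \<le> r + r * (q - 1)"
    proof -
      have den1: "\<bar>\<alpha>\<bar> / 6 * dx\<^sup>2 * (q\<^sup>2 + q + 1) * r + 3 / 2 * \<bar>\<beta>\<bar> * (q + 1) > 0"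
        using assms(4,5) r0 dx by (intro add_nonneg_pos) auto
      have "dt * (\<bar>\<alpha>\<bar> / 6 * dx\<^sup>2 * (q\<^sup>2 + q + 1) * r + 3 / 2 * \<bar>\<beta>\<bar> * (q + 1)) < (q - 1) * dx ^ 3"
        using dt1 den1 unfolding eps1_def by (simp add: pos_less_divide_eq)
      then have "dt * (\<bar>\<alpha>\<bar> / 6 * dx\<^sup>2 * (q\<^sup>2 + q + 1) * r + 3 / 2 * \<bar>\<beta>\<bar> * (q + 1)) / dx ^ 3 \<le> q - 1"
        using dx by (simp add: divide_le_eq)
      then show ?thesis using r0 by (intro add_left_mono mult_left_mono) auto
    qed
    finally show ?thesis by (simp add: algebra_simps)
  qed
  have contr: "\<bar>Phi f k - Phi g k\<bar> \<le> c * D"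
    if hf: "\<And>j. \<bar>f j\<bar> \<le> q * r" and hg: "\<And>j. \<bar>g j\<bar> \<le> q * r" and hd: "\<And>j. \<bar>f j - g j\<bar> \<le> D" for f g k D
  proof -
    have b1: "\<bar>(f j - g j) * (f j + g j + v j)\<bar> \<le> D * ((2 * q + 1) * r)" for j
    proof -
      have "\<bar>f j + g j + v j\<bar> \<le> (2 * q + 1) * r" using hf[of j] hg[of j] vb[of j] by (simp add: algebra_simps)
      then show ?thesis unfolding abs_mult using hd[of j] by (intro mult_mono) auto
    qed
    have "\<bar>Phi f k - Phi g k\<bar> \<le> dt * (\<bar>\<alpha>\<bar> / 6 * \<bar>delta1 dx (\<lambda>j. (f j - g j) * (f j + g j + v j)) k\<bar>
        + \<bar>\<beta>\<bar> / 2 * \<bar>delta1 dx (delta2 dx (\<lambda>j. f j - g j)) k\<bar>)"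
      unfolding Phi_def phiS_diff[OF dx[THEN less_imp_neq, symmetric]]
      using abs_comb[OF assms(3), of 0 \<alpha> _ "\<beta>/2"] by (simp add: abs_divide)
    also have "\<dots> \<le> dt * (\<bar>\<alpha>\<bar> / 6 * (D * ((2 * q + 1) * r) / dx) + \<bar>\<beta>\<bar> / 2 * (3 * D / dx ^ 3))"
      using d1_bound[OF dx b1] d1d2_bound[OF dx hd] assms(3)
      by (intro add_mono mult_left_mono mult_mono) auto
    also have "\<dots> = c * D" unfolding c_def using dx by (simp add: field_simps)
    finally show ?thesis .
  qed
  have Pper: "periodic_grid K (Phi f)" if hf: "periodic_grid K f" for f
    unfolding periodic_grid_def
  proof
    fix k
    have e1: "(\<lambda>j. v (j + int K)) = v" using vper unfolding periodic_grid_def by auto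
    have e2: "(\<lambda>j. f (j + int K)) = f" using hf unfolding periodic_grid_def by auto
    show "Phi f (k + int K) = Phi f k" unfolding Phi_def phiS_shift e1 e2 ..
  qed
  have fp: "Phi y k = y k" if hy: "scheme_sol \<alpha> \<beta> dx dt v y" for y k
  proof -
    define R where "R = - (\<alpha> / 6) * delta1 dx (\<lambda>j. (y j)\<^sup>2 + y j * v j + (v j)\<^sup>2) k
        + \<beta> * delta1 dx (delta2 dx (\<lambda>j. (y j + v j) / 2)) k"
    have "(y k - v k) / dt = R" using hy unfolding scheme_sol_def R_def by blast
    then have "y k = v k + dt * R" using assms(3) by (simp add: field_simps)
    then show ?thesis unfolding Phi_def phiS_def R_def by simp
  qed
  have sol_fp: "scheme_sol \<alpha> \<beta> dx dt v y" if hy: "\<And>k. Phi y k = y k" for y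
    unfolding scheme_sol_def
  proof
    fix k
    define R where "R = - (\<alpha> / 6) * delta1 dx (\<lambda>j. (y j)\<^sup>2 + y j * v j + (v j)\<^sup>2) k
        + \<beta> * delta1 dx (delta2 dx (\<lambda>j. (y j + v j) / 2)) k"
    have "y k = v k + dt * R" using hy[of k] unfolding Phi_def phiS_def R_def by simp
    then have "(y k - v k) / dt = R" using assms(3) by (simp add: field_simps)
    then show "(y k - v k) / dt = - (\<alpha> / 6) * delta1 dx (\<lambda>j. (y j)\<^sup>2 + y j * v j + (v j)\<^sup>2) k
        + \<beta> * delta1 dx (delta2 dx (\<lambda>j. (y j + v j) / 2)) k" unfolding R_def .
  qed
  define x where "x n = (Phi ^^ n) v" for n
  have xS: "x (Suc n) = Phi (x n)" for n unfolding x_def by simp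
  have x0: "x 0 = v" unfolding x_def by simp
  have xper: "periodic_grid K (x n)" for n
    by (induction n) (auto simp: x0 xS vper Pper)
  have xb: "\<And>k. \<bar>x n k\<bar> \<le> q * r" for n
  proof (induction n)
    case 0 show ?case unfolding x0 using vb qr order.trans by blast
  next
    case (Suc n) show ?case unfolding xS by (rule inv) (rule Suc.IH)
  qed
  have xd: "\<And>k. \<bar>x (Suc n) k - x n k\<bar> \<le> c ^ n * (2 * q * r)" for n
  proof (induction n)
    case 0
    fix k
    have "\<bar>x (Suc 0) k - x 0 k\<bar> \<le> \<bar>x (Suc 0) k\<bar> + \<bar>x 0 k\<bar>" by (rule abs_triangle_ineq4)
    also have "\<dots> \<le> q * r + q * r" using xb by (intro add_mono) auto
    finally show "\<bar>x (Suc 0) k - x 0 k\<bar> \<le> c ^ 0 * (2 * q * r)" by simp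
  next
    case (Suc n)
    fix k
    have "\<bar>x (Suc (Suc n)) k - x (Suc n) k\<bar> \<le> c * (c ^ n * (2 * q * r))"
      unfolding xS[of "Suc n"] xS[of n] by (rule contr) (auto simp: xb xS[symmetric] Suc.IH)
    then show "\<bar>x (Suc (Suc n)) k - x (Suc n) k\<bar> \<le> c ^ Suc n * (2 * q * r)" by (simp add: mult.assoc)
  qed
  define w where "w k = x 0 k + suminf (\<lambda>i. x (Suc i) k - x i k)" for k
  have lim: "(\<lambda>n. x n k) \<longlonglongrightarrow> w k" for k
  proof -
    have summ: "summable (\<lambda>i. x (Suc i) k - x i k)"
      by (rule summable_comparison_test'[where g="\<lambda>n. c^n*(2*q*r)" and N=0])
        (auto intro!: summable_mult2 summable_geometric simp: c0 c1 xd)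
    have "(\<lambda>n. x 0 k + (\<Sum>i<n. x (Suc i) k - x i k)) \<longlonglongrightarrow> w k"
      unfolding w_def by (intro tendsto_intros summable_LIMSEQ summ)
    then show ?thesis using sum_lessThan_telescope[of "\<lambda>i. x i k"] by simp
  qed
  have wfix: "Phi w k = w k" for k
  proof -
    have a: "(\<lambda>n. x (Suc n) k) \<longlonglongrightarrow> w k" using LIMSEQ_Suc[OF lim] .
    have "(\<lambda>n. Phi (x n) k) \<longlonglongrightarrow> Phi w k"
      unfolding Phi_def phiS_def delta1_def delta2_def using dx by (intro tendsto_intros lim) simp_all
    then have "(\<lambda>n. x (Suc n) k) \<longlonglongrightarrow> Phi w k" unfolding xS .
    then show ?thesis using a LIMSEQ_unique by blast
  qed
  have wper: "periodic_grid K w"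
    unfolding periodic_grid_def w_def using xper unfolding periodic_grid_def by simp
  have wb: "\<bar>w k\<bar> \<le> q * r" for k
    using tendsto_rabs[OF lim[of k]] xb by (intro LIMSEQ_le_const2) auto
  have uniq: "y = z" if hy: "periodic_grid K y" "scheme_sol \<alpha> \<beta> dx dt v y" "\<And>k. \<bar>y k\<bar> \<le> q * r"
     and hz: "periodic_grid K z" "scheme_sol \<alpha> \<beta> dx dt v z" "\<And>k. \<bar>z k\<bar> \<le> q * r" for y z
  proof -
    define d where "d k = y k - z k" for k
    have dper: "periodic_grid K d" using hy(1) hz(1) unfolding periodic_grid_def d_def by simp
    define D where "D = grid_norm K d"
    have dD: "\<bar>y k - z k\<bar> \<le> D" for k using per_bound[OF dper assms(2)] unfolding D_def d_def .
    have "\<bar>d k\<bar> \<le> c * D" for k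
    proof -
      have "d k = Phi y k - Phi z k" unfolding d_def using fp hy(2) hz(2) by simp
      also have "\<bar>\<dots>\<bar> \<le> c * D" by (rule contr[OF hy(3) hz(3) dD])
      finally show ?thesis .
    qed
    then have "D \<le> c * D" unfolding D_def using norm_le assms(2) by blast
    moreover have "D \<ge> 0" using dD[of 0] by linarith
    moreover have "D \<le> 0"
    proof -
      have "(1 - c) * D \<le> 0" using \<open>D \<le> c * D\<close> by (simp add: algebra_simps)
      then show ?thesis using c1 by (simp add: mult_le_0_iff)
    qed
    ultimately have "D = 0" by simp
    then show ?thesis using dD by (intro ext) (metis abs_le_zero_iff eq_iff_diff_eq_0)
  qed
  have main: "\<exists>!w. periodic_grid K w \<and> scheme_sol \<alpha> \<beta> dx dt v w \<and> grid_norm K w \<le> q * r"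
  proof (rule ex1I[of _ w])
    show "periodic_grid K w \<and> scheme_sol \<alpha> \<beta> dx dt v w \<and> grid_norm K w \<le> q * r"
    proof -
      have "grid_norm K w \<le> q * r" by (rule norm_le[OF assms(2)]) (rule wb)
      then show ?thesis using wper sol_fp[OF wfix] by blast
    qed
  next
    fix y assume "periodic_grid K y \<and> scheme_sol \<alpha> \<beta> dx dt v y \<and> grid_norm K y \<le> q * r"
    then have h1: "periodic_grid K y" and h2: "scheme_sol \<alpha> \<beta> dx dt v y" and h3: "grid_norm K y \<le> q * r"
      by auto
    have h4: "\<bar>y k\<bar> \<le> q * r" for k using per_bound[OF h1 assms(2), of k] h3 by linarith
    show "y = w" by (rule uniq[OF h1 h2 h4 wper sol_fp[OF wfix] wb])
  qed
  then show ?thesis unfolding dx_def v_def .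
qed

end
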